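(* Let $E$ be a countable directed graph which is row-finite and has no sources, let $G$ be a discrete group acting on $E$ by graph automorphisms, and let $\varphi:G\times E^1\to G$ be a 1-cocycle with $\varphi(g,a)\cdot x=g\cdot x$ for all $g,a,x$. Then every tight filter in the semilattice of idempotents $E(\mathcal{S}_{G,E})$ is an ultrafilter; that is, the tight spectrum $\widehat E_{\mathrm{tight}}(\mathcal{S}_{G,E})$ coincides with the space $\widehat E_\infty(\mathcal{S}_{G,E})$ of ultrafilters (which is homeomorphic to $E^\infty$ via $\omega\mapsto\{(\omega|_n,1,\omega|_n):n\in\mathbb{N}\}$).
   Context: Conventions: paths $\alpha=\alpha_1\cdots\alpha_n$ with $s(\alpha_i)=r(\alpha_{i+1})$, $r(\alpha)=r(\alpha_1)$, $s(\alpha)=s(\alpha_n)$; vertices are paths of length 0; $E^*$ finite paths, $E^\infty$ infinite paths $\omega=\omega_1\omega_2\cdots$, $\omega|_n=\omega_1\cdots\omega_n$. Row-finite without sources: $0<|r^{-1}(x)|<\infty$ for every vertex $x$. 1-cocycle: $\varphi(gh,a)=\varphi(g,ha)\varphi(h,a)$; action and cocycle extend to paths by $g(a\alpha')=(ga)(\varphi(g,a)\alpha')$, $\varphi(g,a\alpha')=\varphi(\varphi(g,a),\alpha')$, $\varphi(g,x)=g$ for vertices. $\mathcal{S}_{G,E}=\{(\alpha,g,\beta):\alpha,\beta\in E^*,\ g\in G,\ s(\alpha)=g\,s(\beta)\}\cup\{0\}$, with $(\alpha,g,\beta)(\gamma,h,\delta)$ equal to $(\alpha,g\varphi(h,\varepsilon),\delta(h^{-1}\varepsilon))$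 if $\beta=\gamma\varepsilon$, to $(\alpha(g\varepsilon),\varphi(g,\varepsilon)h,\delta)$ if $\gamma=\beta\varepsilon$, and $0$ otherwise; $(\alpha,g,\beta)^*=(\beta,g^{-1},\alpha)$. Its nonzero idempotents are $(\alpha,1,\alpha)$, $\alpha\in E^*$, with $(\alpha,1,\alpha)\le(\beta,1,\beta)$ iff $\beta$ is a prefix of $\alpha$. A filter is a nonempty subset $\xi\subseteq E(\mathcal{S}_{G,E})$ not containing $0$, closed under products and upward closed; an ultrafilter is a maximal filter. For finite $X,Y\subseteq E(S)$, $E(S)^{X,Y}=\{e: e\le x\ \forall x\in X,\ ey=0\ \forall y\in Y\}$; a finite $Z\subseteq E(S)^{X,Y}$ is a cover if every nonzero element of $E(S)^{X,Y}$ has nonzero product with some $z\in Z$. A filter $\xi$ is tight if whenever $X,Y$ are finite with $X\subseteq\xi$ and $Y\cap\xi=\emptyset$, every finite cover $Z$ of $E(S)^{X,Y}$ satisfies $Z\cap\xi\ne\emptyset$. *)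

theory Defs
  imports "HOL-Algebra.Group" "HOL-Library.Countable_Set" "HOL-Library.Sublist"
begin

text \<open>A finite path is represented as a pair (v, l): v is its range vertex r(alpha)
  and l = [alpha_1, ..., alpha_n] its list of edges; a vertex x is the path (x, []).\<close>

type_synonym ('v,'e) fpath = "'v \<times> 'e list"

fun composable :: "('e \<Rightarrow> 'v) \<Rightarrow> ('e \<Rightarrow> 'v) \<Rightarrow> 'e list \<Rightarrow> bool" where
  "composable r s [] = True"
| "composable r s [a] = True"
| "composable r s (a # b # l) = (s a = r b \<and> composable r s (b # l))"

definition is_path :: "('e \<Rightarrow> 'v) \<Rightarrow> ('e \<Rightarrow> 'v) \<Rightarrow> ('v,'e) fpath \<Rightarrow> bool" where
  "is_path r s \<alpha> \<longleftrightarrow> composable r s (snd \<alpha>) \<and> (snd \<alpha> \<noteq> [] \<longrightarrow> r (hd (snd \<alpha>)) = fst \<alpha>)"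

definition src_path :: "('e \<Rightarrow> 'v) \<Rightarrow> ('v,'e) fpath \<Rightarrow> 'v" where
  "src_path s \<alpha> = (if snd \<alpha> = [] then fst \<alpha> else s (last (snd \<alpha>)))"

fun act_edges :: "('g \<Rightarrow> 'e \<Rightarrow> 'e) \<Rightarrow> ('g \<Rightarrow> 'e \<Rightarrow> 'g) \<Rightarrow> 'g \<Rightarrow> 'e list \<Rightarrow> 'e list" where
  "act_edges aE \<phi> g [] = []"
| "act_edges aE \<phi> g (a # l) = aE g a # act_edges aE \<phi> (\<phi> g a) l"

fun cocycle_edges :: "('g \<Rightarrow> 'e \<Rightarrow> 'g) \<Rightarrow> 'g \<Rightarrow> 'e list \<Rightarrow> 'g" where
  "cocycle_edges \<phi> g [] = g"
| "cocycle_edges \<phi> g (a # l) = cocycle_edges \<phi> (\<phi> g a) l"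

datatype ('v,'e,'g) sge = SZero | STr "('v,'e) fpath" 'g "('v,'e) fpath"

definition S_GE :: "'g monoid \<Rightarrow> ('e \<Rightarrow> 'v) \<Rightarrow> ('e \<Rightarrow> 'v) \<Rightarrow> ('g \<Rightarrow> 'v \<Rightarrow> 'v)
    \<Rightarrow> ('v,'e,'g) sge set" where
  "S_GE G r s aV = {SZero} \<union>
     {STr \<alpha> g \<beta> | \<alpha> g \<beta>. is_path r s \<alpha> \<and> is_path r s \<beta> \<and> g \<in> carrier G
        \<and> src_path s \<alpha> = aV g (src_path s \<beta>)}"

text \<open>(alpha,g,beta)(gamma,h,delta) =
   (alpha, g phi(h,eps), delta (h^-1 eps))  if beta = gamma eps,
   (alpha (g eps), phi(g,eps) h, delta)     if gamma = beta eps,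
   0 otherwise.\<close>

definition S_mult :: "'g monoid \<Rightarrow> ('g \<Rightarrow> 'e \<Rightarrow> 'e) \<Rightarrow> ('g \<Rightarrow> 'e \<Rightarrow> 'g)
    \<Rightarrow> ('v,'e,'g) sge \<Rightarrow> ('v,'e,'g) sge \<Rightarrow> ('v,'e,'g) sge" where
  "S_mult G aE \<phi> x y =
    (case x of SZero \<Rightarrow> SZero
     | STr \<alpha> g \<beta> \<Rightarrow>
       (case y of SZero \<Rightarrow> SZero
        | STr \<gamma> h \<delta> \<Rightarrow>
          (if fst \<beta> = fst \<gamma> \<and> prefix (snd \<gamma>) (snd \<beta>) then
             (let \<epsilon> = drop (length (snd \<gamma>)) (snd \<beta>) in
               STr \<alpha> (g \<otimes>\<^bsub>G\<^esub> cocycle_edges \<phi> h \<epsilon>)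
                   (fst \<delta>, snd \<delta> @ act_edges aE \<phi> (inv\<^bsub>G\<^esub> h) \<epsilon>))
           else if fst \<beta> = fst \<gamma> \<and> prefix (snd \<beta>) (snd \<gamma>) then
             (let \<epsilon> = drop (length (snd \<beta>)) (snd \<gamma>) in
               STr (fst \<alpha>, snd \<alpha> @ act_edges aE \<phi> g \<epsilon>)
                   (cocycle_edges \<phi> g \<epsilon> \<otimes>\<^bsub>G\<^esub> h) \<delta>)
           else SZero)))"

definition idempotents :: "'a set \<Rightarrow> ('a \<Rightarrow> 'a \<Rightarrow> 'a) \<Rightarrow> 'a set" where
  "idempotents S m = {e \<in> S. m e e = e}"

definition sl_le :: "('a \<Rightarrow> 'a \<Rightarrow> 'a) \<Rightarrow> 'a \<Rightarrow> 'a \<Rightarrow> bool" where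
  "sl_le m e f \<longleftrightarrow> m e f = e"

definition is_filter :: "'a set \<Rightarrow> ('a \<Rightarrow> 'a \<Rightarrow> 'a) \<Rightarrow> 'a \<Rightarrow> 'a set \<Rightarrow> bool" where
  "is_filter E m z \<xi> \<longleftrightarrow> \<xi> \<subseteq> E \<and> \<xi> \<noteq> {} \<and> z \<notin> \<xi>
     \<and> (\<forall>e\<in>\<xi>. \<forall>f\<in>\<xi>. m e f \<in> \<xi>)
     \<and> (\<forall>e\<in>\<xi>. \<forall>f\<in>E. sl_le m e f \<longrightarrow> f \<in> \<xi>)"

definition is_ultrafilter :: "'a set \<Rightarrow> ('a \<Rightarrow> 'a \<Rightarrow> 'a) \<Rightarrow> 'a \<Rightarrow> 'a set \<Rightarrow> bool" where
  "is_ultrafilter E m z \<xi> \<longleftrightarrow> is_filter E m z \<xi>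
     \<and> (\<forall>\<eta>. is_filter E m z \<eta> \<and> \<xi> \<subseteq> \<eta> \<longrightarrow> \<eta> = \<xi>)"

definition E_XY :: "'a set \<Rightarrow> ('a \<Rightarrow> 'a \<Rightarrow> 'a) \<Rightarrow> 'a \<Rightarrow> 'a set \<Rightarrow> 'a set \<Rightarrow> 'a set" where
  "E_XY E m z X Y = {e \<in> E. (\<forall>x\<in>X. sl_le m e x) \<and> (\<forall>y\<in>Y. m e y = z)}"

definition is_cover :: "'a set \<Rightarrow> ('a \<Rightarrow> 'a \<Rightarrow> 'a) \<Rightarrow> 'a \<Rightarrow> 'a set \<Rightarrow> 'a set \<Rightarrow> 'a set \<Rightarrow> bool" where
  "is_cover E m z X Y Z \<longleftrightarrow> finite Z \<and> Z \<subseteq> E_XY E m z X Y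
     \<and> (\<forall>e\<in>E_XY E m z X Y. e \<noteq> z \<longrightarrow> (\<exists>\<zeta>\<in>Z. m e \<zeta> \<noteq> z))"

definition is_tight_filter :: "'a set \<Rightarrow> ('a \<Rightarrow> 'a \<Rightarrow> 'a) \<Rightarrow> 'a \<Rightarrow> 'a set \<Rightarrow> bool" where
  "is_tight_filter E m z \<xi> \<longleftrightarrow> is_filter E m z \<xi>
     \<and> (\<forall>X Y Z. finite X \<and> finite Y \<and> X \<subseteq> E \<and> Y \<subseteq> E \<and> X \<subseteq> \<xi> \<and> Y \<inter> \<xi> = {}
            \<and> is_cover E m z X Y Z \<longrightarrow> Z \<inter> \<xi> \<noteq> {})"

end

theory Submission
  imports Defs
begin

definition pp :: "('v,'e) fpath \<Rightarrow> ('v,'e) fpath \<Rightarrow> bool" where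
  "pp \<beta> \<alpha> \<longleftrightarrow> fst \<beta> = fst \<alpha> \<and> prefix (snd \<beta>) (snd \<alpha>)"

lemma pp_refl: "pp a a" by (simp add: pp_def)
lemma pp_trans: "pp a b \<Longrightarrow> pp b c \<Longrightarrow> pp a c"
  unfolding pp_def by (auto intro: prefix_order.trans)
lemma pp_antisym: "pp a b \<Longrightarrow> pp b a \<Longrightarrow> a = b"
  unfolding pp_def by (auto simp: prod_eq_iff intro: prefix_order.antisym)
lemma pp_len: "pp a b \<Longrightarrow> length (snd a) \<le> length (snd b)"
  unfolding pp_def prefix_def by auto
lemma pp_len_eq: "pp a b \<Longrightarrow> length (snd b) \<le> length (snd a) \<Longrightarrow> a = b"
  unfolding pp_def prefix_def by (auto simp: prod_eq_iff)

definition ext :: "('v,'e) fpath \<Rightarrow> 'e \<Rightarrow> ('v,'e) fpath" where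
  "ext \<alpha> e = (fst \<alpha>, snd \<alpha> @ [e])"

lemma length_act: "length (act_edges aE \<phi> g l) = length l"
  by (induction l arbitrary: g) auto

lemma composable_append1: "composable r s (xs @ ys) \<Longrightarrow> composable r s xs"
  by (induction r s xs rule: composable.induct) auto

lemma composable_mid: "composable r s (xs @ b # ys) \<Longrightarrow> xs \<noteq> [] \<Longrightarrow> s (last xs) = r b"
  by (induction r s xs rule: composable.induct) auto

lemma composable_snoc: "composable r s xs \<Longrightarrow> xs \<noteq> [] \<Longrightarrow> s (last xs) = r b \<Longrightarrow> composable r s (xs @ [b])"
  by (induction r s xs rule: composable.induct) auto

lemma is_path_ext: "is_path r s \<alpha> \<Longrightarrow> r e = src_path s \<alpha> \<Longrightarrow> is_path r s (ext \<alpha> e)"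
  unfolding is_path_def ext_def src_path_def
  by (cases "snd \<alpha> = []") (auto intro: composable_snoc)

lemma pp_ext: "pp \<alpha> (ext \<alpha> e)"
  by (simp add: pp_def ext_def)

lemma len_ext: "length (snd (ext \<alpha> e)) = Suc (length (snd \<alpha>))"
  by (simp add: ext_def)

lemma pp_ext_cases: "pp \<delta> (ext \<alpha> e) \<Longrightarrow> \<delta> = ext \<alpha> e \<or> pp \<delta> \<alpha>"
  unfolding pp_def ext_def by (auto simp: prod_eq_iff prefix_snoc)

lemma pp_next: assumes "is_path r s \<beta>" "pp \<alpha> \<beta>" "length (snd \<alpha>) < length (snd \<beta>)"
  shows "\<exists>b. r b = src_path s \<alpha> \<and> pp (ext \<alpha> b) \<beta>"
proof -
  from assms(2) obtain zs where z: "snd \<beta> = snd \<alpha> @ zs" and f: "fst \<alpha> = fst \<beta>"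
    unfolding pp_def prefix_def by auto
  with assms(3) obtain b ys where zs: "zs = b # ys" by (cases zs) auto
  have "r b = src_path s \<alpha>"
  proof (cases "snd \<alpha> = []")
    case True then show ?thesis using assms(1) z zs f by (simp add: is_path_def src_path_def)
  next
    case False then show ?thesis using assms(1) z zs composable_mid[of r s "snd \<alpha>" b ys]
      by (simp add: is_path_def src_path_def)
  qed
  moreover have "pp (ext \<alpha> b) \<beta>" using z zs f by (simp add: pp_def ext_def)
  ultimately show ?thesis by blast
qed


locale sgeL =
  fixes G :: "'g monoid" (structure) and r s :: "'e \<Rightarrow> 'v" and aV :: "'g \<Rightarrow> 'v \<Rightarrow> 'v"
    and aE :: "'g \<Rightarrow> 'e \<Rightarrow> 'e" and \<phi> :: "'g \<Rightarrow> 'e \<Rightarrow> 'g"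
  assumes grp: "group G" and aV1: "aV \<one>\<^bsub>G\<^esub> = id" and aE1: "aE \<one>\<^bsub>G\<^esub> = id"
    and phi1: "\<forall>a. \<phi> \<one>\<^bsub>G\<^esub> a = \<one>\<^bsub>G\<^esub>"
    and rf: "\<forall>x. finite {e. r e = x}" and ns: "\<forall>x. {e. r e = x} \<noteq> {}"
begin

abbreviation "m \<equiv> S_mult G aE \<phi>"
abbreviation "EE \<equiv> idempotents (S_GE G r s aV) m"
abbreviation I :: "('v,'e) fpath \<Rightarrow> ('v,'e,'g) sge" where "I \<alpha> \<equiv> STr \<alpha> \<one>\<^bsub>G\<^esub> \<alpha>"

lemma coc_one: "cocycle_edges \<phi> \<one>\<^bsub>G\<^esub> l = \<one>\<^bsub>G\<^esub>"
  by (induction l) (auto simp: phi1)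

lemma act_one: "act_edges aE \<phi> \<one>\<^bsub>G\<^esub> l = l"
  by (induction l) (auto simp: phi1 aE1)

lemma mult_zero[simp]: "m SZero x = SZero" "m x SZero = SZero"
  by (auto simp: S_mult_def split: sge.split)

lemma mult_I: "m (I \<alpha>) (I \<beta>) = (if pp \<beta> \<alpha> then I \<alpha> else if pp \<alpha> \<beta> then I \<beta> else SZero)"
proof -
  interpret group G by (rule grp)
  show ?thesis
    unfolding S_mult_def pp_def
    by (auto simp: coc_one act_one Let_def prefix_def prod_eq_iff)
qed

lemma mult_I_le: "pp \<beta> \<alpha> \<Longrightarrow> m (I \<alpha>) (I \<beta>) = I \<alpha> \<and> m (I \<beta>) (I \<alpha>) = I \<alpha>"
  using mult_I pp_antisym by metis

lemma mult_I_nz: "m (I \<alpha>) (I \<beta>) \<noteq> SZero \<Longrightarrow> pp \<beta> \<alpha> \<or> pp \<alpha> \<beta>"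
  using mult_I by (metis sge.distinct(1))

lemma sl_le_I: "sl_le m (I \<alpha>) (I \<beta>) \<longleftrightarrow> pp \<beta> \<alpha>"
  unfolding sl_le_def using mult_I pp_antisym by (metis sge.distinct(1) sge.inject)

lemma sl_le_Z: "\<not> sl_le m (I \<alpha>) SZero"
  unfolding sl_le_def by simp

lemma idem_char: "x \<in> EE \<longleftrightarrow> x = SZero \<or> (\<exists>\<alpha>. is_path r s \<alpha> \<and> x = I \<alpha>)"
proof -
  interpret group G by (rule grp)
  show ?thesis
  proof
    assume x: "x \<in> EE"
    show "x = SZero \<or> (\<exists>\<alpha>. is_path r s \<alpha> \<and> x = I \<alpha>)"
    proof (cases x)
      case SZero then show ?thesis by simp
    next
      case (STr \<alpha> g \<beta>)
      with x have P: "is_path r s \<alpha>" "g \<in> carrier G" and mm: "m x x = x"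
        by (auto simp: idempotents_def S_GE_def)
      have "\<alpha> = \<beta> \<and> g = \<one>"
      proof (cases "fst \<beta> = fst \<alpha> \<and> prefix (snd \<alpha>) (snd \<beta>)")
        case True
        define zs where "zs = drop (length (snd \<alpha>)) (snd \<beta>)"
        have zs: "snd \<beta> = snd \<alpha> @ zs" using True unfolding zs_def prefix_def by auto
        from mm True STr have "STr \<alpha> (g \<otimes> cocycle_edges \<phi> g zs) (fst \<beta>, snd \<beta> @ act_edges aE \<phi> (inv g) zs) = STr \<alpha> g \<beta>"
          by (simp add: S_mult_def Let_def zs_def)
        then have "act_edges aE \<phi> (inv g) zs = []" "g \<otimes> cocycle_edges \<phi> g zs = g"
          by (auto simp: prod_eq_iff)
        then have "zs = []" "g \<otimes> g = g" 
          using length_act[of aE \<phi> "inv g" zs] by auto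
        then show ?thesis using True zs P by (auto simp: prod_eq_iff)
      next
        case False
        then have F: "\<not> (fst \<beta> = fst \<alpha> \<and> prefix (snd \<alpha>) (snd \<beta>))" .
        show ?thesis
        proof (cases "fst \<beta> = fst \<alpha> \<and> prefix (snd \<beta>) (snd \<alpha>)")
          case True
          define zs where "zs = drop (length (snd \<beta>)) (snd \<alpha>)"
          have zs: "snd \<alpha> = snd \<beta> @ zs" using True unfolding zs_def prefix_def by auto
          from mm True F STr have "STr (fst \<alpha>, snd \<alpha> @ act_edges aE \<phi> g zs) (cocycle_edges \<phi> g zs \<otimes> g) \<beta> = STr \<alpha> g \<beta>"
            by (simp add: S_mult_def Let_def zs_def)
          then have "act_edges aE \<phi> g zs = []" "cocycle_edges \<phi> g zs \<otimes> g = g"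
            by (auto simp: prod_eq_iff)
          then have "zs = []" "g \<otimes> g = g" 
            using length_act[of aE \<phi> g zs] by auto
          then show ?thesis using True zs P by (auto simp: prod_eq_iff)
        next
          case False
          with F mm STr show ?thesis by (auto simp: S_mult_def)
        qed
      qed
      then show ?thesis using STr P by blast
    qed
  next
    assume "x = SZero \<or> (\<exists>\<alpha>. is_path r s \<alpha> \<and> x = I \<alpha>)"
    then show "x \<in> EE"
      by (auto simp: idempotents_def S_GE_def aV1 mult_I pp_refl)
  qed
qed


lemma I_EE: "is_path r s \<alpha> \<Longrightarrow> I \<alpha> \<in> EE"
  using idem_char[of "I \<alpha>"] by blast

lemma filt_I: "is_filter EE m SZero \<xi> \<Longrightarrow> x \<in> \<xi> \<Longrightarrow> \<exists>\<alpha>. is_path r s \<alpha> \<and> x = I \<alpha>"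
proof -
  assume F: "is_filter EE m SZero \<xi>" and x: "x \<in> \<xi>"
  then have "x \<in> EE" "x \<noteq> SZero" unfolding is_filter_def by auto
  then show ?thesis using idem_char[of x] by simp
qed

lemma filt_path: "is_filter EE m SZero \<xi> \<Longrightarrow> I \<alpha> \<in> \<xi> \<Longrightarrow> is_path r s \<alpha>"
  using filt_I by blast

lemma filt_cmp: "is_filter EE m SZero \<xi> \<Longrightarrow> I \<alpha> \<in> \<xi> \<Longrightarrow> I \<beta> \<in> \<xi> \<Longrightarrow> pp \<alpha> \<beta> \<or> pp \<beta> \<alpha>"
  unfolding is_filter_def using mult_I_nz by metis

lemma filt_up: "is_filter EE m SZero \<xi> \<Longrightarrow> I \<alpha> \<in> \<xi> \<Longrightarrow> pp \<beta> \<alpha> \<Longrightarrow> is_path r s \<beta> \<Longrightarrow> I \<beta> \<in> \<xi>"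
proof -
  assume F: "is_filter EE m SZero \<xi>" and a: "I \<alpha> \<in> \<xi>" and p: "pp \<beta> \<alpha>" and b: "is_path r s \<beta>"
  have "I \<beta> \<in> EE" using idem_char[of "I \<beta>"] b by blast
  moreover have "sl_le m (I \<alpha>) (I \<beta>)" using sl_le_I p by simp
  ultimately show ?thesis using F a unfolding is_filter_def by blast
qed

lemma filt_below: "is_filter EE m SZero \<xi> \<Longrightarrow> I \<alpha> \<in> \<xi> \<Longrightarrow> I \<beta> \<in> \<xi> \<Longrightarrow>
   length (snd \<beta>) < length (snd \<alpha>) \<Longrightarrow> pp \<beta> \<alpha>"
  using filt_cmp pp_len by fastforce

lemma tight_ext:
  assumes T: "is_tight_filter EE m SZero \<xi>" and a: "I \<alpha> \<in> \<xi>"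
  shows "\<exists>e. r e = src_path s \<alpha> \<and> I (ext \<alpha> e) \<in> \<xi>"
proof -
  have F: "is_filter EE m SZero \<xi>" using T by (simp add: is_tight_filter_def)
  have pa: "is_path r s \<alpha>" using filt_path[OF F a] .
  define Z where "Z = (\<lambda>e. I (ext \<alpha> e)) ` {e. r e = src_path s \<alpha>}"
  have aE: "I \<alpha> \<in> EE" using pa by (rule I_EE)
  have cov: "is_cover EE m SZero {I \<alpha>} {} Z"
    unfolding is_cover_def
  proof (intro conjI ballI impI)
    show "finite Z" unfolding Z_def using rf by simp
    show "Z \<subseteq> E_XY EE m SZero {I \<alpha>} {}"
    proof -
      have "I (ext \<alpha> e) \<in> E_XY EE m SZero {I \<alpha>} {}" if "r e = src_path s \<alpha>" for e
        using I_EE[OF is_path_ext[OF pa that]] sl_le_I[of "ext \<alpha> e" \<alpha>] pp_ext[of \<alpha> e]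
        unfolding E_XY_def by simp
      then show ?thesis unfolding Z_def by blast
    qed
  next
    fix x assume x: "x \<in> E_XY EE m SZero {I \<alpha>} {}" "x \<noteq> SZero"
    then obtain \<beta> where b: "is_path r s \<beta>" "x = I \<beta>" "pp \<alpha> \<beta>"
    proof -
      from x have "x \<in> EE" "sl_le m x (I \<alpha>)" unfolding E_XY_def by auto
      then obtain \<beta> where "is_path r s \<beta>" "x = I \<beta>" using idem_char[of x] x(2) by blast
      then show ?thesis using that \<open>sl_le m x (I \<alpha>)\<close> sl_le_I by blast
    qed
    show "\<exists>\<zeta>\<in>Z. m x \<zeta> \<noteq> SZero"
    proof (cases "length (snd \<alpha>) < length (snd \<beta>)")
      case True
      then obtain c where c: "r c = src_path s \<alpha>" "pp (ext \<alpha> c) \<beta>" using pp_next b by blast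
      then show ?thesis unfolding Z_def using b mult_I_le[OF c(2)] by auto
    next
      case False
      then have "\<beta> = \<alpha>" using pp_len_eq b(3) by (metis not_less)
      obtain c where c: "r c = src_path s \<alpha>" using ns by blast
      then show ?thesis unfolding Z_def using b \<open>\<beta> = \<alpha>\<close> mult_I_le[OF pp_ext[of \<alpha> c]] by auto
    qed
  qed
  have TT: "\<forall>X Y Z. finite X \<and> finite Y \<and> X \<subseteq> EE \<and> Y \<subseteq> EE \<and> X \<subseteq> \<xi> \<and> Y \<inter> \<xi> = {}
            \<and> is_cover EE m SZero X Y Z \<longrightarrow> Z \<inter> \<xi> \<noteq> {}"
    using T unfolding is_tight_filter_def by blast
  have "Z \<inter> \<xi> \<noteq> {}"
    using TT[rule_format, of "{I \<alpha>}" "{}" Z] cov a aE by simp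
  then show ?thesis unfolding Z_def by auto
qed

lemma tight_long:
  assumes T: "is_tight_filter EE m SZero \<xi>"
  shows "\<exists>\<alpha>. I \<alpha> \<in> \<xi> \<and> n \<le> length (snd \<alpha>)"
proof (induction n)
  case 0
  have F: "is_filter EE m SZero \<xi>" using T by (simp add: is_tight_filter_def)
  then obtain x where "x \<in> \<xi>" unfolding is_filter_def by blast
  then show ?case using filt_I[OF F] by blast
next
  case (Suc n)
  then obtain \<alpha> where "I \<alpha> \<in> \<xi>" "n \<le> length (snd \<alpha>)" by blast
  then obtain e where "I (ext \<alpha> e) \<in> \<xi>" using tight_ext[OF T] by blast
  then show ?case using len_ext[of \<alpha> e] \<open>n \<le> length (snd \<alpha>)\<close> by (intro exI[of _ "ext \<alpha> e"]) simp
qed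

lemma tight_ultra:
  assumes T: "is_tight_filter EE m SZero \<xi>"
  shows "is_ultrafilter EE m SZero \<xi>"
proof -
  have F: "is_filter EE m SZero \<xi>" using T by (simp add: is_tight_filter_def)
  have "\<eta> = \<xi>" if H: "is_filter EE m SZero \<eta>" "\<xi> \<subseteq> \<eta>" for \<eta>
  proof
    show "\<eta> \<subseteq> \<xi>"
    proof
      fix x assume x: "x \<in> \<eta>"
      then obtain \<beta> where b: "is_path r s \<beta>" "x = I \<beta>" using filt_I[OF H(1)] by blast
      obtain \<alpha> where a: "I \<alpha> \<in> \<xi>" "Suc (length (snd \<beta>)) \<le> length (snd \<alpha>)"
        using tight_long[OF T] by blast
      have "pp \<beta> \<alpha>" using filt_below[OF H(1), of \<alpha> \<beta>] a H(2) x b by auto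
      then show "x \<in> \<xi>" using filt_up[OF F a(1)] b by blast
    qed
  qed (fact H(2))
  then show ?thesis using F unfolding is_ultrafilter_def by blast
qed


lemma ultra_long:
  assumes U: "is_ultrafilter EE m SZero \<xi>"
  shows "\<exists>\<alpha>. I \<alpha> \<in> \<xi> \<and> n \<le> length (snd \<alpha>)"
proof (rule ccontr)
  assume "\<not> ?thesis"
  then have bd: "\<And>\<alpha>. I \<alpha> \<in> \<xi> \<Longrightarrow> length (snd \<alpha>) < n" by force
  have F: "is_filter EE m SZero \<xi>" using U unfolding is_ultrafilter_def by (rule conjunct1)
  define L where "L = (\<lambda>\<alpha>. length (snd \<alpha>)) ` {\<alpha>. I \<alpha> \<in> \<xi>}"
  have "L \<subseteq> {..<n}" unfolding L_def using bd by (intro image_subsetI) simp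
  then have finL: "finite L" using finite_subset by blast
  have "\<xi> \<noteq> {}" using F by (simp add: is_filter_def)
  then obtain x where "x \<in> \<xi>" by blast
  then obtain \<alpha>0 where "x = I \<alpha>0" using filt_I[OF F] by blast
  then have "\<alpha>0 \<in> {\<alpha>. I \<alpha> \<in> \<xi>}" using \<open>x \<in> \<xi>\<close> by simp
  then have "L \<noteq> {}" unfolding L_def by blast
  then have "Max L \<in> L" using finL by simp
  then obtain \<alpha> where a0: "\<alpha> \<in> {\<alpha>. I \<alpha> \<in> \<xi>}" "Max L = length (snd \<alpha>)" unfolding L_def by (rule imageE)
  then have a: "I \<alpha> \<in> \<xi>" "length (snd \<alpha>) = Max L" by simp_all
  have mx: "length (snd \<beta>) \<le> length (snd \<alpha>)" if "I \<beta> \<in> \<xi>" for \<beta>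
  proof -
    have "length (snd \<beta>) \<in> L" unfolding L_def using that by simp
    then show ?thesis using a(2) finL by simp
  qed
  have below: "pp \<beta> \<alpha>" if "I \<beta> \<in> \<xi>" for \<beta>
    using filt_cmp[OF F a(1) that] pp_len_eq[of \<alpha> \<beta>] mx[OF that] pp_refl by metis
  have pa: "is_path r s \<alpha>" using filt_path[OF F a(1)] .
  have "{e. r e = src_path s \<alpha>} \<noteq> {}" using ns by simp
  then obtain e where e: "r e = src_path s \<alpha>" by blast
  define \<alpha>' where "\<alpha>' = ext \<alpha> e"
  have pa': "is_path r s \<alpha>'" unfolding \<alpha>'_def using is_path_ext[OF pa e] .
  define \<eta> where "\<eta> = insert (I \<alpha>') \<xi>"
  have below': "pp \<beta> \<alpha>'" if "I \<beta> \<in> \<xi>" for \<beta>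
    unfolding \<alpha>'_def by (rule pp_trans[OF below[OF that] pp_ext])
  have F1: "\<xi> \<subseteq> EE" using F by (simp add: is_filter_def)
  have F2: "SZero \<notin> \<xi>" using F by (simp add: is_filter_def)
  have F3: "\<And>x y. x \<in> \<xi> \<Longrightarrow> y \<in> \<xi> \<Longrightarrow> m x y \<in> \<xi>" using F by (simp add: is_filter_def)
  have F4: "\<And>x f. x \<in> \<xi> \<Longrightarrow> f \<in> EE \<Longrightarrow> sl_le m x f \<Longrightarrow> f \<in> \<xi>" using F by (simp add: is_filter_def)
  have ma: "m (I \<alpha>') y = I \<alpha>' \<and> m y (I \<alpha>') = I \<alpha>'" if y: "y \<in> \<eta>" for y
  proof (cases "y = I \<alpha>'")
    case True then show ?thesis using mult_I_le[OF pp_refl[of \<alpha>']] by simp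
  next
    case False
    then have "y \<in> \<xi>" using y unfolding \<eta>_def by simp
    then obtain \<beta> where b: "y = I \<beta>" using filt_I[OF F] by blast
    then have "I \<beta> \<in> \<xi>" using \<open>y \<in> \<xi>\<close> by simp
    then show ?thesis using mult_I_le[OF below'] b by simp
  qed
  have Fe: "is_filter EE m SZero \<eta>"
    unfolding is_filter_def
  proof (intro conjI ballI impI)
    show "\<eta> \<subseteq> EE" using F1 I_EE[OF pa'] unfolding \<eta>_def by simp
    show "\<eta> \<noteq> {}" unfolding \<eta>_def by simp
    show "SZero \<notin> \<eta>" using F2 unfolding \<eta>_def by simp
  next
    fix x y assume x: "x \<in> \<eta>" and y: "y \<in> \<eta>"
    show "m x y \<in> \<eta>"
    proof (cases "x = I \<alpha>'")
      case True then show ?thesis using ma[OF y] unfolding \<eta>_def by simp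
    next
      case False
      then have xx: "x \<in> \<xi>" using x unfolding \<eta>_def by simp
      show ?thesis
      proof (cases "y = I \<alpha>'")
        case True then show ?thesis using ma[OF x] unfolding \<eta>_def by simp
      next
        case False
        then have "y \<in> \<xi>" using y unfolding \<eta>_def by simp
        then show ?thesis using F3[OF xx] unfolding \<eta>_def by simp
      qed
    qed
  next
    fix x f assume x: "x \<in> \<eta>" and f: "f \<in> EE" and le: "sl_le m x f"
    show "f \<in> \<eta>"
    proof (cases "x = I \<alpha>'")
      case False
      then have "x \<in> \<xi>" using x unfolding \<eta>_def by simp
      then show ?thesis using F4 f le unfolding \<eta>_def by simp
    next
      case True
      then have xa: "x = I \<alpha>'" .
      have "f \<noteq> SZero" using le xa sl_le_Z by metis
      then obtain \<delta> where d: "is_path r s \<delta>" "f = I \<delta>" using idem_char[of f] f by blast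
      then have "pp \<delta> \<alpha>'" using le xa sl_le_I by simp
      then have "\<delta> = \<alpha>' \<or> pp \<delta> \<alpha>" unfolding \<alpha>'_def by (rule pp_ext_cases)
      then show ?thesis
      proof
        assume "\<delta> = \<alpha>'" then show ?thesis using d(2) unfolding \<eta>_def by simp
      next
        assume "pp \<delta> \<alpha>" then show ?thesis using filt_up[OF F a(1) _ d(1)] d(2) unfolding \<eta>_def by simp
      qed
    qed
  qed
  have "\<xi> \<subseteq> \<eta>" unfolding \<eta>_def by (rule subset_insertI)
  then have "\<eta> = \<xi>" using U Fe unfolding is_ultrafilter_def by blast
  then have "I \<alpha>' \<in> \<xi>" unfolding \<eta>_def by (metis insertI1)
  then have "length (snd \<alpha>') \<le> length (snd \<alpha>)" by (rule mx)
  then show False unfolding \<alpha>'_def using len_ext[of \<alpha> e] by simp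
qed

definition len :: "('v,'e,'g) sge \<Rightarrow> nat" where
  "len x = (case x of SZero \<Rightarrow> 0 | STr \<alpha> g \<beta> \<Rightarrow> length (snd \<alpha>))"

lemma ultra_tight:
  assumes U: "is_ultrafilter EE m SZero \<xi>"
  shows "is_tight_filter EE m SZero \<xi>"
  unfolding is_tight_filter_def
proof (intro conjI allI impI)
  have F: "is_filter EE m SZero \<xi>" using U unfolding is_ultrafilter_def by (rule conjunct1)
  then show "is_filter EE m SZero \<xi>" .
  fix X Y Z
  assume H: "finite X \<and> finite Y \<and> X \<subseteq> EE \<and> Y \<subseteq> EE \<and> X \<subseteq> \<xi> \<and> Y \<inter> \<xi> = {} \<and> is_cover EE m SZero X Y Z"
  then have fin: "finite (X \<union> Y \<union> Z)" unfolding is_cover_def by auto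
  define N where "N = (\<Sum>x\<in>X \<union> Y \<union> Z. len x)"
  obtain \<alpha> where a: "I \<alpha> \<in> \<xi>" "Suc N \<le> length (snd \<alpha>)" using ultra_long[OF U] by blast
  have short: "len x < length (snd \<alpha>)" if "x \<in> X \<union> Y \<union> Z" for x
    using member_le_sum[of x "X \<union> Y \<union> Z" len] that fin a(2) unfolding N_def by simp
  have shortI: "length (snd \<beta>) < length (snd \<alpha>)" if "I \<beta> \<in> X \<union> Y \<union> Z" for \<beta>
    using short[OF that] by (simp add: len_def)
  have pa: "is_path r s \<alpha>" using filt_path[OF F a(1)] .
  have inxi: "z \<in> \<xi>" if z: "z \<in> X \<union> Y \<union> Z" "z \<in> EE" "m (I \<alpha>) z \<noteq> SZero" for z
  proof -
    have "z \<noteq> SZero" using z(3) by auto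
    then obtain \<gamma> where g: "is_path r s \<gamma>" "z = I \<gamma>" using idem_char[of z] z(2) by blast
    have "pp \<gamma> \<alpha> \<or> pp \<alpha> \<gamma>" using mult_I_nz z(3) g(2) by blast
    moreover have "\<not> pp \<alpha> \<gamma>" using pp_len shortI z(1) g(2) by fastforce
    ultimately show ?thesis using filt_up[OF F a(1) _ g(1)] g(2) by blast
  qed
  have inE: "I \<alpha> \<in> E_XY EE m SZero X Y"
    unfolding E_XY_def
  proof (intro CollectI conjI ballI)
    show "I \<alpha> \<in> EE" using I_EE[OF pa] .
  next
    fix x assume x: "x \<in> X"
    then have "x \<in> \<xi>" using H by blast
    then obtain \<beta> where b: "x = I \<beta>" using filt_I[OF F] by blast
    then have "pp \<beta> \<alpha>" using filt_below[OF F a(1), of \<beta>] \<open>x \<in> \<xi>\<close> shortI x by blast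
    then show "sl_le m (I \<alpha>) x" using b sl_le_I by blast
  next
    fix y assume y: "y \<in> Y"
    show "m (I \<alpha>) y = SZero"
    proof (rule ccontr)
      assume "m (I \<alpha>) y \<noteq> SZero"
      then have "y \<in> \<xi>" using inxi[of y] y H by blast
      then show False using y H by blast
    qed
  qed
  show "Z \<inter> \<xi> \<noteq> {}"
  proof -
    have "I \<alpha> \<noteq> SZero" by simp
    then obtain \<zeta> where z: "\<zeta> \<in> Z" "m (I \<alpha>) \<zeta> \<noteq> SZero" using H inE unfolding is_cover_def by blast
    have "\<zeta> \<in> EE" using z(1) H unfolding is_cover_def E_XY_def by blast
    then have "\<zeta> \<in> \<xi>" using inxi[of \<zeta>] z by blast
    then show ?thesis using z(1) by blast
  qed
qed

end

theorem proposition4p1: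
  fixes G :: "'g monoid"
    and r s :: "'e \<Rightarrow> 'v"
    and aV :: "'g \<Rightarrow> 'v \<Rightarrow> 'v"
    and aE :: "'g \<Rightarrow> 'e \<Rightarrow> 'e"
    and \<phi> :: "'g \<Rightarrow> 'e \<Rightarrow> 'g"
  assumes countV: "countable (UNIV :: 'v set)"
    and countE: "countable (UNIV :: 'e set)"
    and row_finite: "\<forall>x. finite {e. r e = x}"
    and no_sources: "\<forall>x. {e. r e = x} \<noteq> {}"
    and grp: "group G"
    and actV_one: "aV \<one>\<^bsub>G\<^esub> = id"
    and actE_one: "aE \<one>\<^bsub>G\<^esub> = id"
    and actV_mult: "\<forall>g\<in>carrier G. \<forall>h\<in>carrier G. aV (g \<otimes>\<^bsub>G\<^esub> h) = aV g \<circ> aV h"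
    and actE_mult: "\<forall>g\<in>carrier G. \<forall>h\<in>carrier G. aE (g \<otimes>\<^bsub>G\<^esub> h) = aE g \<circ> aE h"
    and auto_bij: "\<forall>g\<in>carrier G. bij (aV g) \<and> bij (aE g)"
    and auto_r: "\<forall>g\<in>carrier G. \<forall>e. r (aE g e) = aV g (r e)"
    and auto_s: "\<forall>g\<in>carrier G. \<forall>e. s (aE g e) = aV g (s e)"
    and cocycle_closed: "\<forall>g\<in>carrier G. \<forall>a. \<phi> g a \<in> carrier G"
    and cocycle: "\<forall>g\<in>carrier G. \<forall>h\<in>carrier G. \<forall>a.
                    \<phi> (g \<otimes>\<^bsub>G\<^esub> h) a = \<phi> g (aE h a) \<otimes>\<^bsub>G\<^esub> \<phi> h a"
    and cocycle_vertex: "\<forall>g\<in>carrier G. \<forall>a x. aV (\<phi> g a) x = aV g x"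
  shows "{\<xi>. is_tight_filter (idempotents (S_GE G r s aV) (S_mult G aE \<phi>)) (S_mult G aE \<phi>) SZero \<xi>}
       = {\<xi>. is_ultrafilter (idempotents (S_GE G r s aV) (S_mult G aE \<phi>)) (S_mult G aE \<phi>) SZero \<xi>}"
proof -
  interpret group G by (rule grp)
  have phi1: "\<forall>a. \<phi> \<one>\<^bsub>G\<^esub> a = \<one>\<^bsub>G\<^esub>"
  proof
    fix a
    have c: "\<phi> \<one>\<^bsub>G\<^esub> a \<in> carrier G" using cocycle_closed by simp
    have "\<phi> \<one>\<^bsub>G\<^esub> a = \<phi> \<one>\<^bsub>G\<^esub> a \<otimes>\<^bsub>G\<^esub> \<phi> \<one>\<^bsub>G\<^esub> a"
      using cocycle[rule_format, of "\<one>\<^bsub>G\<^esub>" "\<one>\<^bsub>G\<^esub>" a] actE_one by simp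
    then show "\<phi> \<one>\<^bsub>G\<^esub> a = \<one>\<^bsub>G\<^esub>" using c by simp
  qed
  interpret L: sgeL G r s aV aE \<phi>
    unfolding sgeL_def using grp actV_one actE_one phi1 row_finite no_sources by (intro conjI)
  show ?thesis using L.ultra_tight L.tight_ultra by blast
qed

end
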